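(* Let $D$ be a digraph with $n$ vertices and $a$ arcs, with outdegrees $d_1^+,\dots,d_n^+$, and let $\alpha\in[0,1)$. Then $$\|D_\alpha\|_*\le \sqrt{n\Big[(1-\alpha)^2a+\alpha^2\sum_{i=1}^n (d_i^+)^2\Big]},$$ with equality if and only if either (a) $D$ has no arcs, or (b) $\alpha=0$ and $D$ is a direct sum (vertex-disjoint union) of directed cycles.
   Context: Digraphs are simple: a finite vertex set and a set of arcs, which are ordered pairs of distinct vertices, with no parallel arcs (a pair of opposite arcs is allowed). A directed cycle of order $m\ge 2$ has vertices $w_1,\dots,w_m$ and arcs $(w_1,w_2),\dots,(w_{m-1},w_m),(w_m,w_1)$. For a digraph $D$ on vertices $v_1,\dots,v_n$, the adjacency matrix $A(D)=(a_{ij})$ has $a_{ij}=1$ if $(v_i,v_j)$ is an arc and $0$ otherwise; $d_i^+$ is the outdegree of $v_i$, and $\Delta^+(D)=\mathrm{diag}(d_1^+,\dots,d_n^+)$. For $\alpha\in[0,1)$, $A_\alpha(D)=\alpha\Delta^+(D)+(1-\alpha)A(D)$. The $\alpha$-trace norm $\|D_\alpha\|_*$ is the sum of the singular values of $A_\alpha(D)$, i.e. of the nonnegative square roots of the eigenvalues of $A_\alpha(D)A_\alpha(D)^T$, with multiplicity. *)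

theory Defs
  imports "Jordan_Normal_Form.Char_Poly"
begin

text \<open>Digraphs on vertex set {0..<n}; arcs E are ordered pairs of distinct vertices.\<close>

definition outdeg :: "(nat \<times> nat) set \<Rightarrow> nat \<Rightarrow> nat" where
  "outdeg E i = card {j. (i, j) \<in> E}"

definition adj_mat :: "nat \<Rightarrow> (nat \<times> nat) set \<Rightarrow> real mat" where
  "adj_mat n E = mat n n (\<lambda>(i, j). if (i, j) \<in> E then 1 else 0)"

definition outdeg_mat :: "nat \<Rightarrow> (nat \<times> nat) set \<Rightarrow> real mat" where
  "outdeg_mat n E = mat n n (\<lambda>(i, j). if i = j then real (outdeg E i) else 0)"

definition A_alpha :: "real \<Rightarrow> nat \<Rightarrow> (nat \<times> nat) set \<Rightarrow> real mat" where
  "A_alpha \<alpha> n E = \<alpha> \<cdot>\<^sub>m outdeg_mat n E + (1 - \<alpha>) \<cdot>\<^sub>m adj_mat n E"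

text \<open>Sum of singular values: sum of the nonnegative square roots of the eigenvalues
  of M M^T counted with multiplicity (roots of the characteristic polynomial, which
  are all real since M M^T is real symmetric).\<close>
definition trace_norm :: "real mat \<Rightarrow> real" where
  "trace_norm M = (let p = char_poly (M * transpose_mat M) in
     (\<Sum>x\<in>{y. poly p y = 0}. real (order x p) * sqrt x))"

definition alpha_trace_norm :: "real \<Rightarrow> nat \<Rightarrow> (nat \<times> nat) set \<Rightarrow> real" where
  "alpha_trace_norm \<alpha> n E = trace_norm (A_alpha \<alpha> n E)"

definition cycle_arcs :: "nat list \<Rightarrow> (nat \<times> nat) set" where
  "cycle_arcs ws = {(ws ! i, ws ! ((i + 1) mod length ws)) | i. i < length ws}"

definition direct_sum_of_cycles :: "nat \<Rightarrow> (nat \<times> nat) set \<Rightarrow> bool" where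
  "direct_sum_of_cycles n E \<longleftrightarrow>
     (\<exists>C :: nat list set.
        (\<forall>ws\<in>C. distinct ws \<and> length ws \<ge> 2) \<and>
        (\<forall>ws1\<in>C. \<forall>ws2\<in>C. ws1 \<noteq> ws2 \<longrightarrow> set ws1 \<inter> set ws2 = {}) \<and>
        (\<Union>ws\<in>C. set ws) = {0..<n} \<and>
        E = (\<Union>ws\<in>C. cycle_arcs ws))"

end

theory Submission
  imports Defs "Jordan_Normal_Form.Schur_Decomposition"
begin


definition mtrace :: "real mat \<Rightarrow> real" where
  "mtrace A = (\<Sum>i=0..<dim_row A. A $$ (i,i))"

lemma mtrace_comm:
  assumes A: "A \<in> carrier_mat n m" and B: "B \<in> carrier_mat m n"
  shows "mtrace (A * B) = mtrace (B * A)"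
proof -
  have "mtrace (A * B) = (\<Sum>i=0..<n. \<Sum>k=0..<m. A$$(i,k) * B$$(k,i))"
    using A B by (auto simp: mtrace_def scalar_prod_def intro!: sum.cong)
  also have "\<dots> = (\<Sum>k=0..<m. \<Sum>i=0..<n. B$$(k,i) * A$$(i,k))"
    by (subst sum.swap) (simp add: mult.commute)
  also have "\<dots> = mtrace (B * A)"
    using A B by (auto simp: mtrace_def scalar_prod_def intro!: sum.cong)
  finally show ?thesis .
qed

lemma mtrace_similar:
  assumes "similar_mat_wit A B P Q" and A: "A \<in> carrier_mat n n"
  shows "mtrace A = mtrace B" "mtrace (A * A) = mtrace (B * B)"
proof -
  from similar_mat_witD2[OF A assms(1)]
  have B: "B \<in> carrier_mat n n" and P: "P \<in> carrier_mat n n" and Q: "Q \<in> carrier_mat n n"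
    and PQ: "P * Q = 1\<^sub>m n" and QP: "Q * P = 1\<^sub>m n" and AB: "A = P * B * Q" by auto
  have "mtrace A = mtrace (P * (B * Q))" using AB P B Q by (simp add: assoc_mult_mat)
  also have "\<dots> = mtrace ((B * Q) * P)" by (rule mtrace_comm[OF P], insert B Q, auto)
  also have "(B * Q) * P = B" using B Q P QP by (simp add: assoc_mult_mat)
  finally show "mtrace A = mtrace B" .
  have QPX: "Q * (P * X) = X" if X: "X \<in> carrier_mat n n" for X
    using QP X P Q by (simp add: assoc_mult_mat[symmetric, of Q n n P n X n])
  have BQ: "B * Q \<in> carrier_mat n n" "P * (B * Q) \<in> carrier_mat n n" using B Q P by auto
  have A': "A = P * (B * Q)" using AB P B Q by (simp add: assoc_mult_mat)
  have "A * A = P * ((B * Q) * (P * (B * Q)))" unfolding A' by (rule assoc_mult_mat[OF P BQ(1) BQ(2)])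
  also have "(B * Q) * (P * (B * Q)) = B * (Q * (P * (B * Q)))" by (rule assoc_mult_mat[OF B Q BQ(2)])
  also have "Q * (P * (B * Q)) = B * Q" by (rule QPX[OF BQ(1)])
  also have "B * (B * Q) = (B * B) * Q" by (rule assoc_mult_mat[symmetric, OF B B Q])
  finally have "A * A = P * ((B * B) * Q)" .
  then have "mtrace (A * A) = mtrace (P * ((B * B) * Q))" by simp
  also have "\<dots> = mtrace (((B * B) * Q) * P)" by (rule mtrace_comm[OF P], insert B Q, auto)
  also have "((B * B) * Q) * P = B * B"
  proof -
    have BB: "B * B \<in> carrier_mat n n" using B by auto
    have "((B * B) * Q) * P = (B * B) * (Q * P)" by (rule assoc_mult_mat[OF BB Q P])
    then show ?thesis using QP right_mult_one_mat[OF BB] by simp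
  qed
  finally show "mtrace (A * A) = mtrace (B * B)" .
qed

lemma mtrace_ut:
  assumes B: "B \<in> carrier_mat n n" and ut: "upper_triangular B"
  shows "mtrace B = sum_list (diag_mat B)" "mtrace (B * B) = sum_list (map (\<lambda>x. x^2) (diag_mat B))"
proof -
  show "mtrace B = sum_list (diag_mat B)"
    using B by (simp add: mtrace_def diag_mat_def sum_list_sum_nth)
  have "(B * B) $$ (i,i) = (B $$ (i,i))^2" if i: "i < n" for i
  proof -
    have "(B * B) $$ (i,i) = (\<Sum>k=0..<n. B$$(i,k) * B$$(k,i))"
      using B i by (simp add: scalar_prod_def)
    also have "\<dots> = (\<Sum>k\<in>{i}. B$$(i,k) * B$$(k,i))"
    proof (rule sum.mono_neutral_right)
      show "\<forall>k\<in>{0..<n} - {i}. B$$(i,k) * B$$(k,i) = 0"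
      proof
        fix k assume k: "k \<in> {0..<n} - {i}"
        show "B$$(i,k) * B$$(k,i) = 0"
        proof (cases "k < i")
          case True then show ?thesis using ut B i unfolding upper_triangular_def by auto
        next
          case False then have "i < k" using k by auto
          then show ?thesis using ut B k unfolding upper_triangular_def by auto
        qed
      qed
    qed (use i in auto)
    finally show ?thesis by (simp add: power2_eq_square)
  qed
  then show "mtrace (B * B) = sum_list (map (\<lambda>x. x^2) (diag_mat B))"
    using B by (simp add: mtrace_def diag_mat_def sum_list_sum_nth)
qed

lemma eig_real_nonneg:
  fixes M :: "real mat" and e :: complex
  assumes M: "M \<in> carrier_mat n n"
    and ev: "eigenvalue (map_mat complex_of_real (M * transpose_mat M)) e"
  shows "e = of_real (Re e) \<and> Re e \<ge> 0"
proof -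
  let ?S = "M * transpose_mat M"
  let ?SC = "map_mat complex_of_real ?S"
  have S: "?S \<in> carrier_mat n n" using M by auto
  have SC: "?SC \<in> carrier_mat n n" using S by auto
  from ev obtain v where "eigenvector ?SC v e" unfolding eigenvalue_def by auto
  then have v: "v \<in> carrier_vec n" "v \<noteq> 0\<^sub>v n" "?SC *\<^sub>v v = e \<cdot>\<^sub>v v"
    unfolding eigenvector_def using SC by auto
  have Sij: "?S $$ (i,j) = (\<Sum>k=0..<n. M $$ (i,k) * M $$ (j,k))" if "i < n" "j < n" for i j
    using M that by (auto simp: scalar_prod_def mult.commute)
  have eq: "(\<Sum>j=0..<n. of_real (?S $$ (i,j)) * v$j) = e * v$i" if i: "i < n" for i
  proof -
    have "(?SC *\<^sub>v v) $ i = (e \<cdot>\<^sub>v v) $ i" using v by simp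
    moreover have "(?SC *\<^sub>v v) $ i = (\<Sum>j=0..<n. of_real (?S $$ (i,j)) * v$j)"
      using i v(1) S by (auto simp: scalar_prod_def mult.commute)
    moreover have "(e \<cdot>\<^sub>v v) $ i = e * v$i" using i v(1) by auto
    ultimately show ?thesis by simp
  qed
  define w where "w k = (\<Sum>j=0..<n. of_real (M$$(j,k)) * v$j)" for k
  have cw: "cnj (w k) = (\<Sum>j=0..<n. of_real (M$$(j,k)) * cnj (v$j))" for k
    unfolding w_def by simp
  have "(\<Sum>i=0..<n. cnj (v$i) * (\<Sum>j=0..<n. of_real (?S $$ (i,j)) * v$j))
      = (\<Sum>i=0..<n. \<Sum>j=0..<n. \<Sum>k=0..<n. cnj (v$i) * of_real (M$$(i,k)) * (of_real (M$$(j,k)) * v$j))"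
  proof (rule sum.cong[OF refl])
    fix i assume i: "i \<in> {0..<n}"
    have "cnj (v$i) * (\<Sum>j=0..<n. of_real (?S $$ (i,j)) * v$j) = (\<Sum>j=0..<n. cnj (v$i) * (of_real (?S $$ (i,j)) * v$j))"
      by (rule sum_distrib_left)
    also have "\<dots> = (\<Sum>j=0..<n. \<Sum>k=0..<n. cnj (v$i) * of_real (M$$(i,k)) * (of_real (M$$(j,k)) * v$j))"
    proof (rule sum.cong[OF refl])
      fix j assume j: "j \<in> {0..<n}"
      have "cnj (v$i) * (of_real (?S $$ (i,j)) * v$j) = (\<Sum>k=0..<n. cnj (v$i) * (of_real (M$$(i,k) * M$$(j,k)) * v$j))"
      proof -
        have "?S $$ (i,j) = (\<Sum>k=0..<n. M $$ (i,k) * M $$ (j,k))" using Sij i j by auto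
        then show ?thesis by (simp only: of_real_sum sum_distrib_left sum_distrib_right)
      qed
      also have "\<dots> = (\<Sum>k=0..<n. cnj (v$i) * of_real (M$$(i,k)) * (of_real (M$$(j,k)) * v$j))"
        by (simp add: mult_ac)
      finally show "cnj (v$i) * (of_real (?S $$ (i,j)) * v$j) = (\<Sum>k=0..<n. cnj (v$i) * of_real (M$$(i,k)) * (of_real (M$$(j,k)) * v$j))" .
    qed
    finally show "cnj (v$i) * (\<Sum>j=0..<n. of_real (?S $$ (i,j)) * v$j) = (\<Sum>j=0..<n. \<Sum>k=0..<n. cnj (v$i) * of_real (M$$(i,k)) * (of_real (M$$(j,k)) * v$j))" .
  qed
  also have "\<dots> = (\<Sum>k=0..<n. \<Sum>i=0..<n. \<Sum>j=0..<n. cnj (v$i) * of_real (M$$(i,k)) * (of_real (M$$(j,k)) * v$j))"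
    by (subst sum.swap, rule sum.cong[OF refl], rule sum.swap)
  also have "\<dots> = (\<Sum>k=0..<n. cnj (w k) * w k)"
    unfolding cw unfolding w_def sum_product by (rule sum.cong[OF refl], rule sum.cong[OF refl], rule sum.cong[OF refl], simp add: mult_ac)
  also have "\<dots> = of_real (\<Sum>k=0..<n. (cmod (w k))^2)"
    by (simp add: complex_norm_square[symmetric] mult.commute)
  finally have 1: "(\<Sum>i=0..<n. cnj (v$i) * (\<Sum>j=0..<n. of_real (?S $$ (i,j)) * v$j)) = of_real (\<Sum>k=0..<n. (cmod (w k))^2)" .
  have "(\<Sum>i=0..<n. cnj (v$i) * (\<Sum>j=0..<n. of_real (?S $$ (i,j)) * v$j)) = e * of_real (\<Sum>i=0..<n. (cmod (v$i))^2)"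
  proof -
    have "(\<Sum>i=0..<n. cnj (v$i) * (\<Sum>j=0..<n. of_real (?S $$ (i,j)) * v$j)) = (\<Sum>i=0..<n. cnj (v$i) * (e * v$i))"
      by (rule sum.cong[OF refl], simp add: eq)
    then show ?thesis by (simp add: sum_distrib_left complex_norm_square[symmetric] mult_ac)
  qed
  with 1 have 2: "e * of_real (\<Sum>i=0..<n. (cmod (v$i))^2) = of_real (\<Sum>k=0..<n. (cmod (w k))^2)" by simp
  have pos: "(\<Sum>i=0..<n. (cmod (v$i))^2) > 0"
  proof -
    from v obtain i where i: "i < n" "v $ i \<noteq> 0" by (auto simp: vec_eq_iff)
    have "(cmod (v$i))^2 \<le> (\<Sum>i=0..<n. (cmod (v$i))^2)"
      by (rule member_le_sum, insert i, auto)
    moreover have "(cmod (v$i))^2 > 0" using i by auto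
    ultimately show ?thesis by linarith
  qed
  define A where "A = (\<Sum>i=0..<n. (cmod (v$i))^2)"
  define B where "B = (\<Sum>k=0..<n. (cmod (w k))^2)"
  have B: "B \<ge> 0" unfolding B_def by (intro sum_nonneg, auto)
  have 3: "e * of_real A = of_real B" using 2 unfolding A_def B_def .
  have "A \<noteq> 0" using pos unfolding A_def by linarith
  then have A0: "complex_of_real A \<noteq> 0" by simp
  from 3 have "e = of_real B / of_real A" using A0 by (simp add: eq_divide_eq)
  then have "e = of_real (B / A)" by simp
  then show ?thesis using B pos unfolding A_def by auto
qed


lemma real_factor:
  fixes M :: "real mat"
  assumes M: "M \<in> carrier_mat n n"
  shows "\<exists>rs. length rs = n \<and> char_poly (M * transpose_mat M) = (\<Prod>r\<leftarrow>rs. [:-r,1:]) \<and> (\<forall>r\<in>set rs. r \<ge> 0)"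
proof -
  interpret rp: map_poly_inj_comm_ring_hom "of_real :: real \<Rightarrow> complex" by unfold_locales
  let ?S = "M * transpose_mat M"
  let ?SC = "map_mat complex_of_real ?S"
  have S: "?S \<in> carrier_mat n n" using M by auto
  have SC: "?SC \<in> carrier_mat n n" using S by auto
  have cp: "char_poly ?SC = map_poly of_real (char_poly ?S)" by (rule of_real_hom.char_poly_hom[OF S])
  obtain as where as: "char_poly ?SC = (\<Prod>a\<leftarrow>as. [:-a,1:])" "length as = n"
    using char_poly_factorized[OF SC] by auto
  have real: "a = of_real (Re a) \<and> Re a \<ge> 0" if a: "a \<in> set as" for a
  proof -
    have "poly (char_poly ?SC) a = 0" unfolding as(1) by (rule linear_poly_root[OF a])
    then have "eigenvalue ?SC a" using eigenvalue_root_char_poly[OF SC] by simp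
    then show ?thesis by (rule eig_real_nonneg[OF M])
  qed
  define rs where "rs = map Re as"
  have asrs: "as = map of_real rs" unfolding rs_def using real
    by (induction as) auto
  have "map_poly of_real (\<Prod>r\<leftarrow>rs. [:-r,1:]) = (\<Prod>a\<leftarrow>as. [:-a,1:])"
    unfolding asrs
  proof (induction rs)
    case (Cons r rs)
    have "map_poly complex_of_real (\<Prod>r\<leftarrow>r#rs. [:-r,1:]) = map_poly complex_of_real [:-r,1:] * map_poly complex_of_real (\<Prod>r\<leftarrow>rs. [:-r,1:])"
      by (simp only: list.map prod_list.Cons rp.hom_mult)
    also have "map_poly complex_of_real [:-r,1:] = [:-complex_of_real r, 1:]" by simp
    finally show ?case using Cons by simp
  qed simp
  then have "map_poly of_real (char_poly ?S) = map_poly of_real (\<Prod>r\<leftarrow>rs. [:-r,1:])"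
    using cp as by simp
  then have "char_poly ?S = (\<Prod>r\<leftarrow>rs. [:-r,1:])" by (rule rp.injectivity)
  moreover have "length rs = n" using as by (simp add: rs_def)
  moreover have "\<forall>r\<in>set rs. r \<ge> 0" using real by (auto simp: rs_def)
  ultimately show ?thesis by blast
qed

lemma order_prod_lin:
  fixes rs :: "real list"
  shows "Polynomial.order x (\<Prod>r\<leftarrow>rs. [:-r,1:]) = count_list rs x"
proof (induction rs)
  case Nil then show ?case by (simp add: order_0I)
next
  case (Cons r rs)
  have nz1: "[:-r,1:] \<noteq> (0 :: real poly)" by simp
  have nz2: "(\<Prod>r\<leftarrow>rs. [:-r,1:]) \<noteq> (0 :: real poly)" by (auto simp: prod_list_zero_iff)
  have nz: "[:-r,1:] * (\<Prod>r\<leftarrow>rs. [:-r,1:]) \<noteq> 0" by (rule no_zero_divisors[OF nz1 nz2])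
  have "Polynomial.order x (\<Prod>r\<leftarrow>r#rs. [:-r,1:]) = Polynomial.order x [:-r,1:] + Polynomial.order x (\<Prod>r\<leftarrow>rs. [:-r,1:])"
    using order_mult[OF nz] by simp
  then show ?case using Cons by (simp add: order_linear')
qed

lemma roots_prod_lin:
  fixes rs :: "real list"
  shows "{y. poly (\<Prod>r\<leftarrow>rs. [:-r,1:]) y = 0} = set rs"
  by (induction rs) auto

lemma sum_count_list:
  fixes rs :: "real list" and f :: "real \<Rightarrow> real"
  shows "(\<Sum>x\<in>set rs. real (count_list rs x) * f x) = sum_list (map f rs)"
proof (induction rs)
  case Nil then show ?case by simp
next
  case (Cons r rs)
  have fin: "finite (set rs)" by simp
  have "(\<Sum>x\<in>set (r#rs). real (count_list (r#rs) x) * f x)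
      = (\<Sum>x\<in>insert r (set rs). real (count_list rs x) * f x + (if x = r then f x else 0))"
    by (rule sum.cong, auto simp: algebra_simps)
  also have "\<dots> = (\<Sum>x\<in>insert r (set rs). real (count_list rs x) * f x) + f r"
    by (simp add: sum.distrib)
  also have "(\<Sum>x\<in>insert r (set rs). real (count_list rs x) * f x) = (\<Sum>x\<in>set rs. real (count_list rs x) * f x)"
    by (cases "r \<in> set rs") (auto simp: sum.insert[OF fin] count_list_0_iff insert_absorb)
  finally show ?case using Cons by simp
qed

lemma trace_norm_list:
  assumes "char_poly (M * transpose_mat M) = (\<Prod>r\<leftarrow>rs. [:-r,1:])"
  shows "trace_norm M = sum_list (map sqrt rs)"
  unfolding trace_norm_def Let_def assms roots_prod_lin order_prod_lin
  by (rule sum_count_list)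


lemma sq_expand:
  fixes f g :: "nat \<Rightarrow> nat \<Rightarrow> real"
  shows "(\<Sum>i\<in>A. \<Sum>j\<in>B. (f i j - g i j)^2)
     = (\<Sum>i\<in>A. \<Sum>j\<in>B. (f i j)^2) - 2 * (\<Sum>i\<in>A. \<Sum>j\<in>B. f i j * g i j) + (\<Sum>i\<in>A. \<Sum>j\<in>B. (g i j)^2)"
  by (simp add: power2_diff sum.distrib sum_subtractf sum_distrib_left mult.assoc)

lemma cs_identity:
  fixes x :: "nat \<Rightarrow> real"
  shows "(\<Sum>i\<in>A. \<Sum>j\<in>A. (x i - x j)^2) = 2 * real (card A) * (\<Sum>i\<in>A. (x i)^2) - 2 * (\<Sum>i\<in>A. x i)^2"
proof -
  have "(\<Sum>i\<in>A. \<Sum>j\<in>A. (x i - x j)^2) = (\<Sum>i\<in>A. \<Sum>j\<in>A. (x i)^2) - 2 * (\<Sum>i\<in>A. \<Sum>j\<in>A. x i * x j) + (\<Sum>i\<in>A. \<Sum>j\<in>A. (x j)^2)"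
    by (rule sq_expand)
  also have "(\<Sum>i\<in>A. \<Sum>j\<in>A. x i * x j) = (\<Sum>i\<in>A. x i)^2"
    by (simp add: power2_eq_square sum_product)
  also have "(\<Sum>i\<in>A. \<Sum>j\<in>A. (x i)^2) = real (card A) * (\<Sum>i\<in>A. (x i)^2)"
    by (simp add: sum_distrib_left)
  also have "(\<Sum>i\<in>A. \<Sum>j\<in>A. (x j)^2) = real (card A) * (\<Sum>i\<in>A. (x i)^2)"
    by simp
  finally show ?thesis by simp
qed

lemma cs_ineq:
  fixes x :: "nat \<Rightarrow> real"
  assumes "finite A"
  shows "(\<Sum>i\<in>A. x i)^2 \<le> real (card A) * (\<Sum>i\<in>A. (x i)^2)"
    "(\<Sum>i\<in>A. x i)^2 = real (card A) * (\<Sum>i\<in>A. (x i)^2) \<longleftrightarrow> (\<forall>i\<in>A. \<forall>j\<in>A. x i = x j)"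
proof -
  have nn: "0 \<le> (\<Sum>i\<in>A. \<Sum>j\<in>A. (x i - x j)^2)" by (intro sum_nonneg) auto
  then show "(\<Sum>i\<in>A. x i)^2 \<le> real (card A) * (\<Sum>i\<in>A. (x i)^2)"
    unfolding cs_identity by simp
  have "(\<Sum>i\<in>A. x i)^2 = real (card A) * (\<Sum>i\<in>A. (x i)^2) \<longleftrightarrow> (\<Sum>i\<in>A. \<Sum>j\<in>A. (x i - x j)^2) = 0"
    unfolding cs_identity by auto
  also have "\<dots> \<longleftrightarrow> (\<forall>i\<in>A. (\<Sum>j\<in>A. (x i - x j)^2) = 0)"
    by (rule sum_nonneg_eq_0_iff[OF assms]) (intro sum_nonneg, auto)
  also have "\<dots> \<longleftrightarrow> (\<forall>i\<in>A. \<forall>j\<in>A. x i = x j)"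
    using assms by (simp add: sum_nonneg_eq_0_iff)
  finally show "(\<Sum>i\<in>A. x i)^2 = real (card A) * (\<Sum>i\<in>A. (x i)^2) \<longleftrightarrow> (\<forall>i\<in>A. \<forall>j\<in>A. x i = x j)" .
qed


lemma sum_delta_mult:
  fixes f :: "nat \<Rightarrow> real"
  assumes "i < n"
  shows "(\<Sum>j=0..<n. f j * (if i = j then c else 0)) = f i * c"
proof -
  have "(\<Sum>j=0..<n. f j * (if i = j then c else 0)) = (\<Sum>j=0..<n. if j = i then f i * c else 0)"
    by (rule sum.cong) auto
  then show ?thesis using assms by simp
qed

lemma sum_delta_sq:
  fixes i n :: nat
  assumes "i < n"
  shows "(\<Sum>j=0..<n. (if i = j then c else 0)^2) = (c::real)^2"
proof -
  have "(\<Sum>j=0..<n. (if i = j then c else 0)^2) = (\<Sum>j=0..<n. if j = i then c^2 else 0)"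
    by (rule sum.cong) auto
  also have "\<dots> = c^2" using assms by (subst sum.delta) auto
  finally show ?thesis .
qed

lemma tn_main:
  fixes M :: "real mat"
  assumes M: "M \<in> carrier_mat n n"
  shows "trace_norm M \<le> sqrt (real n * mtrace (M * transpose_mat M))"
    "trace_norm M = sqrt (real n * mtrace (M * transpose_mat M)) \<longleftrightarrow> (\<exists>c. M * transpose_mat M = c \<cdot>\<^sub>m 1\<^sub>m n)"
proof -
  define S where "S = M * transpose_mat M"
  have S: "S \<in> carrier_mat n n" using M unfolding S_def by auto
  obtain rs where rs: "length rs = n" "char_poly S = (\<Prod>r\<leftarrow>rs. [:-r,1:])" "\<forall>r\<in>set rs. r \<ge> 0"
    using real_factor[OF M] unfolding S_def by blast
  have rs0: "rs ! i \<ge> 0" if "i < n" for i using rs that nth_mem by metis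
  have tn: "trace_norm M = (\<Sum>i=0..<n. sqrt (rs!i))"
    using trace_norm_list[OF rs(2)[unfolded S_def]] rs(1) by (simp add: sum_list_sum_nth)
  obtain B P Q where sd: "schur_decomposition S rs = (B,P,Q)" by (cases "schur_decomposition S rs") auto
  from schur_decomposition[OF S rs(2) sd] have sim: "similar_mat_wit S B P Q"
    and ut: "upper_triangular B" and dg: "diag_mat B = rs" by auto
  from similar_mat_witD2[OF S sim] have B: "B \<in> carrier_mat n n" by auto
  have tr1: "mtrace S = (\<Sum>i=0..<n. rs!i)"
    using mtrace_similar(1)[OF sim S] mtrace_ut(1)[OF B ut] dg rs(1) by (simp add: sum_list_sum_nth)
  have tr2: "mtrace (S * S) = (\<Sum>i=0..<n. (rs!i)^2)"
    using mtrace_similar(2)[OF sim S] mtrace_ut(2)[OF B ut] dg rs(1) by (simp add: sum_list_sum_nth)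
  have Sij: "S $$ (i,j) = (\<Sum>k=0..<n. M $$ (i,k) * M $$ (j,k))" if "i < n" "j < n" for i j
    using M that unfolding S_def by (auto simp: scalar_prod_def mult.commute)
  have sym: "S $$ (i,j) = S $$ (j,i)" if "i < n" "j < n" for i j
    using Sij[OF that] Sij[OF that(2,1)] by (simp add: mult.commute)
  have trSS: "mtrace (S * S) = (\<Sum>i=0..<n. \<Sum>j=0..<n. (S $$ (i,j))^2)"
  proof -
    have "mtrace (S * S) = (\<Sum>i=0..<n. \<Sum>j=0..<n. S $$ (i,j) * S $$ (j,i))"
      using S by (auto simp: mtrace_def scalar_prod_def intro!: sum.cong)
    also have "\<dots> = (\<Sum>i=0..<n. \<Sum>j=0..<n. (S $$ (i,j))^2)"
      by (intro sum.cong refl) (simp add: sym power2_eq_square)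
    finally show ?thesis .
  qed
  define x where "x i = sqrt (rs ! i)" for i
  have x2: "(x i)^2 = rs ! i" if "i < n" for i using rs0[OF that] by (simp add: x_def)
  have sx2: "(\<Sum>i=0..<n. (x i)^2) = mtrace S" unfolding tr1 by (rule sum.cong) (auto simp: x2)
  have X0: "0 \<le> (\<Sum>i=0..<n. x i)" by (intro sum_nonneg) (simp add: x_def rs0)
  have "0 \<le> mtrace S" unfolding tr1 by (intro sum_nonneg) (simp add: rs0)
  then have Y0: "0 \<le> real n * mtrace S" by simp
  have cs1: "(\<Sum>i=0..<n. x i)^2 \<le> real n * mtrace S"
    using cs_ineq(1)[of "{0..<n}" x] sx2 by simp
  have tnx: "trace_norm M = (\<Sum>i=0..<n. x i)" using tn by (simp add: x_def)
  show "trace_norm M \<le> sqrt (real n * mtrace (M * transpose_mat M))"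
    unfolding tnx S_def[symmetric] using cs1 X0 real_sqrt_le_mono[OF cs1] by simp
  have "trace_norm M = sqrt (real n * mtrace S) \<longleftrightarrow> (\<Sum>i=0..<n. x i)^2 = real n * mtrace S"
    unfolding tnx using X0 Y0 by (metis real_sqrt_abs real_sqrt_pow2 abs_of_nonneg)
  also have "\<dots> \<longleftrightarrow> (\<forall>i\<in>{0..<n}. \<forall>j\<in>{0..<n}. x i = x j)"
    using cs_ineq(2)[of "{0..<n}" x] sx2 by simp
  also have "\<dots> \<longleftrightarrow> (\<forall>i\<in>{0..<n}. \<forall>j\<in>{0..<n}. rs ! i = rs ! j)"
    unfolding x_def by (simp only: real_sqrt_eq_iff)
  also have "\<dots> \<longleftrightarrow> (\<exists>c. S = c \<cdot>\<^sub>m 1\<^sub>m n)"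
  proof
    assume eq: "\<forall>i\<in>{0..<n}. \<forall>j\<in>{0..<n}. rs ! i = rs ! j"
    define c where "c = rs ! 0"
    have rc: "rs ! i = c" if "i < n" for i
    proof -
      have "0 \<in> {0..<n}" "i \<in> {0..<n}" using that by auto
      then show ?thesis using eq unfolding c_def by blast
    qed
    define T where "T i j = (if i = j then c else 0)" for i j :: nat
    have 1: "(\<Sum>i=0..<n. \<Sum>j=0..<n. (S $$ (i,j))^2) = real n * c^2"
      using trSS tr2 rc by simp
    have 2: "(\<Sum>i=0..<n. \<Sum>j=0..<n. S $$ (i,j) * T i j) = real n * c^2"
    proof -
      have "(\<Sum>i=0..<n. \<Sum>j=0..<n. S $$ (i,j) * T i j) = (\<Sum>i=0..<n. S $$ (i,i) * c)"
        unfolding T_def by (intro sum.cong refl) (rule sum_delta_mult, simp)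
      also have "\<dots> = c * mtrace S" using S by (simp add: mtrace_def sum_distrib_left mult.commute)
      finally show ?thesis using tr1 rc by (simp add: power2_eq_square)
    qed
    have 3: "(\<Sum>i=0..<n. \<Sum>j=0..<n. (T i j)^2) = real n * c^2"
      unfolding T_def by (simp add: sum_delta_sq)
    have z: "(\<Sum>i=0..<n. \<Sum>j=0..<n. (S $$ (i,j) - T i j)^2) = 0"
      unfolding sq_expand 1 2 3 by simp
    have "S $$ (i,j) = T i j" if "i < n" "j < n" for i j
    proof -
      have "\<forall>i\<in>{0..<n}. (\<Sum>j=0..<n. (S $$ (i,j) - T i j)^2) = 0"
        using z by (subst (asm) sum_nonneg_eq_0_iff) (auto intro: sum_nonneg)
      then have "(S $$ (i,j) - T i j)^2 = 0" using that by (simp add: sum_nonneg_eq_0_iff)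
      then show ?thesis by simp
    qed
    then have "S = c \<cdot>\<^sub>m 1\<^sub>m n" using S by (intro eq_matI) (auto simp: T_def)
    then show "\<exists>c. S = c \<cdot>\<^sub>m 1\<^sub>m n" by blast
  next
    assume "\<exists>c. S = c \<cdot>\<^sub>m 1\<^sub>m n"
    then obtain c where Sc: "S = c \<cdot>\<^sub>m 1\<^sub>m n" by blast
    have Sij': "S $$ (i,j) = (if i = j then c else 0)" if "i < n" "j < n" for i j
      using that by (simp add: Sc)
    have t1: "(\<Sum>i=0..<n. rs!i) = real n * c"
      using tr1 Sc by (simp add: mtrace_def)
    have t2: "(\<Sum>i=0..<n. (rs!i)^2) = real n * c^2"
    proof -
      have "(\<Sum>i=0..<n. (rs!i)^2) = (\<Sum>i=0..<n. \<Sum>j=0..<n. (S $$ (i,j))^2)" using tr2 trSS by simp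
      also have "\<dots> = (\<Sum>i=0..<n. \<Sum>j=0..<n. (if i = j then c else 0)^2)"
        by (intro sum.cong refl) (simp add: Sij')
      also have "\<dots> = real n * c^2" by (simp add: sum_delta_sq)
      finally show ?thesis .
    qed
    have "(\<Sum>i=0..<n. (rs!i - c)^2) = (\<Sum>i=0..<n. (rs!i)^2) - 2 * c * (\<Sum>i=0..<n. rs!i) + real n * c^2"
      by (simp add: power2_diff sum.distrib sum_subtractf sum_distrib_left mult_ac)
    also have "\<dots> = 0" unfolding t1 t2 by (simp add: power2_eq_square)
    finally have "\<forall>i\<in>{0..<n}. (rs!i - c)^2 = 0" by (subst (asm) sum_nonneg_eq_0_iff) auto
    then show "\<forall>i\<in>{0..<n}. \<forall>j\<in>{0..<n}. rs ! i = rs ! j" by simp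
  qed
  finally show "trace_norm M = sqrt (real n * mtrace (M * transpose_mat M)) \<longleftrightarrow> (\<exists>c. M * transpose_mat M = c \<cdot>\<^sub>m 1\<^sub>m n)"
    unfolding S_def .
qed

lemma perm_cycles:
  fixes f :: "nat \<Rightarrow> nat"
  assumes fn: "\<forall>i<n. f i < n" and inj: "inj_on f {0..<n}" and nf: "\<forall>i<n. f i \<noteq> i"
  shows "direct_sum_of_cycles n {(i, f i) | i. i < n}"
proof -
  have fp: "(f ^^ k) i < n" if "i < n" for i k
    using that by (induction k) (auto simp: fn)
  have injp: "inj_on (f ^^ k) {0..<n}" for k
  proof (induction k)
    case 0 then show ?case by simp
  next
    case (Suc k)
    have "inj_on (f \<circ> (f ^^ k)) {0..<n}"
      by (rule comp_inj_on[OF Suc]) (rule inj_on_subset[OF inj], auto simp: fp)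
    then show ?case by (simp only: funpow.simps(2))
  qed
  have per_ex: "\<exists>k>0. (f ^^ k) i = i" if i: "i < n" for i
  proof -
    have "\<not> inj_on (\<lambda>t. (f ^^ t) i) {0..n}"
    proof
      assume "inj_on (\<lambda>t. (f ^^ t) i) {0..n}"
      moreover have "(\<lambda>t. (f ^^ t) i) ` {0..n} \<subseteq> {0..<n}" using fp i by auto
      ultimately have "card {0..n} \<le> card {0..<n}" by (rule card_inj_on_le) simp
      then show False by simp
    qed
    then obtain a b where ab: "a \<in> {0..n}" "b \<in> {0..n}" "a \<noteq> b" "(f ^^ a) i = (f ^^ b) i"
      unfolding inj_on_def by blast
    have "\<exists>a b. a < b \<and> (f ^^ a) i = (f ^^ b) i"
      using ab by (metis linorder_neqE_nat)
    then obtain a b where ab: "a < b" "(f ^^ a) i = (f ^^ b) i" by blast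
    have "(f ^^ b) i = (f ^^ a) ((f ^^ (b - a)) i)"
      using ab(1) by (metis funpow_add le_add_diff_inverse less_imp_le o_apply)
    then have "(f ^^ a) ((f ^^ (b - a)) i) = (f ^^ a) i" using ab by simp
    then have "(f ^^ (b - a)) i = i"
      using injp[of a] fp i unfolding inj_on_def by auto
    then show ?thesis using ab(1) by (intro exI[of _ "b - a"]) auto
  qed
  define p where "p i = (LEAST k. 0 < k \<and> (f ^^ k) i = i)" for i
  have p: "0 < p i" "(f ^^ p i) i = i" if "i < n" for i
    using LeastI_ex[OF per_ex[OF that]] unfolding p_def by auto
  have pmin: "(f ^^ k) i \<noteq> i" if "i < n" "0 < k" "k < p i" for i k
    using not_less_Least[of k "\<lambda>k. 0 < k \<and> (f ^^ k) i = i"] that unfolding p_def by auto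
  have p2: "p i \<ge> 2" if "i < n" for i
  proof (rule ccontr)
    assume "\<not> p i \<ge> 2"
    then have "p i = 1" using p(1)[OF that] by linarith
    then show False using p(2)[OF that] nf that by simp
  qed
  have pmul: "(f ^^ (q * p i)) i = i" if "i < n" for i q
  proof (induction q)
    case 0 then show ?case by simp
  next
    case (Suc q)
    have "(f ^^ (Suc q * p i)) i = (f ^^ p i) ((f ^^ (q * p i)) i)"
      by (simp add: funpow_add)
    then show ?case using Suc p(2)[OF that] by simp
  qed
  have pmod: "(f ^^ t) i = (f ^^ (t mod p i)) i" if "i < n" for i t
  proof -
    have "t = t mod p i + (t div p i) * p i" by simp
    then have "(f ^^ t) i = (f ^^ (t mod p i)) ((f ^^ ((t div p i) * p i)) i)"
      by (metis funpow_add o_apply)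
    then show ?thesis using pmul[OF that] by simp
  qed
  define Ob where "Ob i = {(f ^^ t) i | t. True}" for i
  define orb where "orb i = map (\<lambda>t. (f ^^ t) i) [0..<p i]" for i
  have set_orb: "set (orb i) = Ob i" if "i < n" for i
  proof
    show "set (orb i) \<subseteq> Ob i" unfolding orb_def Ob_def by auto
    show "Ob i \<subseteq> set (orb i)"
    proof
      fix x assume "x \<in> Ob i"
      then obtain t where "x = (f ^^ t) i" unfolding Ob_def by auto
      then have "x = (f ^^ (t mod p i)) i" using pmod[OF that] by simp
      moreover have "t mod p i < p i" using p(1)[OF that] by simp
      ultimately show "x \<in> set (orb i)" unfolding orb_def by auto
    qed
  qed
  have O_sub: "Ob i \<subseteq> {0..<n}" if "i < n" for i using fp[OF that] unfolding Ob_def by auto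
  have O_self: "i \<in> Ob i" for i unfolding Ob_def by (auto intro: exI[of _ 0])
  have O_mono: "Ob j \<subseteq> Ob i" if "j \<in> Ob i" for i j
  proof
    fix x assume "x \<in> Ob j"
    then obtain t where x: "x = (f ^^ t) j" unfolding Ob_def by auto
    from that obtain s where j: "j = (f ^^ s) i" unfolding Ob_def by auto
    have "x = (f ^^ (t + s)) i" unfolding x j by (simp add: funpow_add)
    then show "x \<in> Ob i" unfolding Ob_def by auto
  qed
  have O_back: "i \<in> Ob j" if "j \<in> Ob i" "i < n" for i j
  proof -
    from that obtain s where j: "j = (f ^^ s) i" unfolding Ob_def by auto
    have "s \<le> s * p i" using p(1)[OF that(2)] by simp
    have "(f ^^ (s * p i - s)) j = (f ^^ (s * p i - s + s)) i" unfolding j by (simp add: funpow_add)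
    also have "s * p i - s + s = s * p i" using \<open>s \<le> s * p i\<close> by simp
    also have "(f ^^ (s * p i)) i = i" using pmul[OF that(2)] by simp
    finally show ?thesis unfolding Ob_def by (metis (mono_tags, lifting) mem_Collect_eq)
  qed
  have O_eq: "Ob j = Ob i" if "j \<in> Ob i" "i < n" for i j
    using O_mono[OF that(1)] O_mono[OF O_back[OF that]] by blast
  have dist: "distinct (orb i)" if i: "i < n" for i
    unfolding orb_def distinct_map
  proof
    show "inj_on (\<lambda>t. (f ^^ t) i) (set [0..<p i])"
    proof (rule inj_onI)
      fix a b assume a: "a \<in> set [0..<p i]" and b: "b \<in> set [0..<p i]" and eq: "(f ^^ a) i = (f ^^ b) i"
      show "a = b"
      proof (rule ccontr)
        assume "a \<noteq> b"
        then consider "a < b" | "b < a" by linarith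
        then show False
        proof cases
          case 1
          have "(f ^^ b) i = (f ^^ a) ((f ^^ (b - a)) i)"
            using 1 by (metis funpow_add le_add_diff_inverse less_imp_le o_apply)
          then have "(f ^^ a) ((f ^^ (b - a)) i) = (f ^^ a) i" using eq by simp
          then have "(f ^^ (b - a)) i = i" using injp[of a] fp i unfolding inj_on_def by auto
          moreover have "b - a < p i" "0 < b - a" using 1 b by auto
          ultimately show False using pmin[OF i, of "b - a"] by blast
        next
          case 2
          have "(f ^^ a) i = (f ^^ b) ((f ^^ (a - b)) i)"
            using 2 by (metis funpow_add le_add_diff_inverse less_imp_le o_apply)
          then have "(f ^^ b) ((f ^^ (a - b)) i) = (f ^^ b) i" using eq by simp
          then have "(f ^^ (a - b)) i = i" using injp[of b] fp i unfolding inj_on_def by auto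
          moreover have "a - b < p i" "0 < a - b" using 2 a by auto
          ultimately show False using pmin[OF i, of "a - b"] by blast
        qed
      qed
    qed
  qed simp
  have len: "length (orb i) = p i" for i unfolding orb_def by simp
  have arcs: "cycle_arcs (orb i) = {(x, f x) | x. x \<in> Ob i}" if i: "i < n" for i
  proof
    show "cycle_arcs (orb i) \<subseteq> {(x, f x) | x. x \<in> Ob i}"
    proof
      fix e assume "e \<in> cycle_arcs (orb i)"
      then obtain t where t: "t < p i" "e = (orb i ! t, orb i ! ((t + 1) mod p i))"
        unfolding cycle_arcs_def len by auto
      have "orb i ! ((t + 1) mod p i) = (f ^^ ((t + 1) mod p i)) i"
        unfolding orb_def using p(1)[OF i] by simp
      also have "\<dots> = (f ^^ (t + 1)) i" using pmod[OF i, of "t+1"] by simp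
      also have "\<dots> = f ((f ^^ t) i)" by simp
      finally have "e = ((f ^^ t) i, f ((f ^^ t) i))" using t unfolding orb_def by simp
      then show "e \<in> {(x, f x) | x. x \<in> Ob i}" unfolding Ob_def by auto
    qed
    show "{(x, f x) | x. x \<in> Ob i} \<subseteq> cycle_arcs (orb i)"
    proof
      fix e assume "e \<in> {(x, f x) | x. x \<in> Ob i}"
      then obtain x where x: "x \<in> Ob i" "e = (x, f x)" by auto
      from x(1) obtain t0 where "x = (f ^^ t0) i" unfolding Ob_def by auto
      then have xt: "x = (f ^^ (t0 mod p i)) i" using pmod[OF i] by simp
      define t where "t = t0 mod p i"
      have t: "t < p i" unfolding t_def using p(1)[OF i] by simp
      have "(f ^^ ((t + 1) mod p i)) i = (f ^^ (t + 1)) i" using pmod[OF i, of "t+1"] by simp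
      then have "orb i ! ((t + 1) mod p i) = f x" unfolding orb_def xt t_def[symmetric] using p(1)[OF i] by simp
      moreover have "orb i ! t = x" unfolding orb_def xt t_def[symmetric] using t by simp
      ultimately show "e \<in> cycle_arcs (orb i)" unfolding cycle_arcs_def len x(2) using t
        by (auto intro!: exI[of _ t])
    qed
  qed
  define C where "C = {orb m | m. m < n \<and> (\<forall>x\<in>Ob m. m \<le> x)}"
  have rep: "\<exists>m. m < n \<and> (\<forall>x\<in>Ob m. m \<le> x) \<and> Ob m = Ob v" if v: "v < n" for v
  proof -
    have fin: "finite (Ob v)" using O_sub[OF v] finite_subset by blast
    define m where "m = Min (Ob v)"
    have m: "m \<in> Ob v" unfolding m_def using fin O_self[of v] by (intro Min_in) auto
    have mn: "m < n" using m O_sub[OF v] by auto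
    have Om: "Ob m = Ob v" by (rule O_eq[OF m v])
    have "\<forall>x\<in>Ob v. m \<le> x" unfolding m_def using fin by auto
    then have "\<forall>x\<in>Ob m. m \<le> x" using Om by simp
    then show ?thesis using mn Om by blast
  qed
  show ?thesis unfolding direct_sum_of_cycles_def
  proof (intro exI[of _ C] conjI)
    show "\<forall>ws\<in>C. distinct ws \<and> 2 \<le> length ws" unfolding C_def using dist p2 len by auto
    show "\<forall>ws1\<in>C. \<forall>ws2\<in>C. ws1 \<noteq> ws2 \<longrightarrow> set ws1 \<inter> set ws2 = {}"
    proof (intro ballI impI)
      fix ws1 ws2 assume w1: "ws1 \<in> C" and w2: "ws2 \<in> C" and ne: "ws1 \<noteq> ws2"
      from w1 obtain m1 where m1: "ws1 = orb m1" "m1 < n" "\<forall>x\<in>Ob m1. m1 \<le> x" unfolding C_def by auto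
      from w2 obtain m2 where m2: "ws2 = orb m2" "m2 < n" "\<forall>x\<in>Ob m2. m2 \<le> x" unfolding C_def by auto
      show "set ws1 \<inter> set ws2 = {}"
      proof (rule ccontr)
        assume "set ws1 \<inter> set ws2 \<noteq> {}"
        then obtain x where "x \<in> Ob m1" "x \<in> Ob m2" using set_orb m1 m2 by auto
        then have "Ob m1 = Ob m2" using O_eq m1 m2 by metis
        then have "m1 \<in> Ob m2" "m2 \<in> Ob m1" using O_self by auto
        then have "m1 = m2" using m1 m2 by force
        then show False using ne m1 m2 by simp
      qed
    qed
    show "(\<Union>ws\<in>C. set ws) = {0..<n}"
    proof
      show "(\<Union>ws\<in>C. set ws) \<subseteq> {0..<n}" unfolding C_def using set_orb O_sub by auto
      show "{0..<n} \<subseteq> (\<Union>ws\<in>C. set ws)"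
      proof
        fix v assume "v \<in> {0..<n}"
        then have v: "v < n" by simp
        from rep[OF v] obtain m where m: "m < n" "\<forall>x\<in>Ob m. m \<le> x" "Ob m = Ob v" by blast
        have "orb m \<in> C" unfolding C_def using m by auto
        moreover have "v \<in> set (orb m)" using set_orb[OF m(1)] m(3) O_self by auto
        ultimately show "v \<in> (\<Union>ws\<in>C. set ws)" by blast
      qed
    qed
    show "{(i, f i) | i. i < n} = (\<Union>ws\<in>C. cycle_arcs ws)"
    proof
      show "{(i, f i) | i. i < n} \<subseteq> (\<Union>ws\<in>C. cycle_arcs ws)"
      proof
        fix e assume "e \<in> {(i, f i) | i. i < n}"
        then obtain v where v: "v < n" "e = (v, f v)" by auto
        from rep[OF v(1)] obtain m where m: "m < n" "\<forall>x\<in>Ob m. m \<le> x" "Ob m = Ob v" by blast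
        have "orb m \<in> C" unfolding C_def using m by auto
        moreover have "e \<in> cycle_arcs (orb m)" unfolding arcs[OF m(1)] m(3) v(2) using O_self by auto
        ultimately show "e \<in> (\<Union>ws\<in>C. cycle_arcs ws)" by blast
      qed
      show "(\<Union>ws\<in>C. cycle_arcs ws) \<subseteq> {(i, f i) | i. i < n}"
      proof
        fix e assume "e \<in> (\<Union>ws\<in>C. cycle_arcs ws)"
        then obtain m where m: "m < n" "e \<in> cycle_arcs (orb m)" unfolding C_def by auto
        then obtain x where "x \<in> Ob m" "e = (x, f x)" unfolding arcs[OF m(1)] by auto
        then show "e \<in> {(i, f i) | i. i < n}" using O_sub[OF m(1)] by auto
      qed
    qed
  qed
qed



lemma modsuc_inj:
  fixes t1 t2 l :: nat
  assumes "t1 < l" "t2 < l" "(t1 + 1) mod l = (t2 + 1) mod l"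
  shows "t1 = t2"
proof -
  have m: "(t + 1) mod l = (if t + 1 = l then 0 else t + 1)" if "t < l" for t
    using that by auto
  show ?thesis using assms m[OF assms(1)] m[OF assms(2)] by (auto split: if_splits)
qed

lemma cyc_props:
  assumes "direct_sum_of_cycles n E"
  shows "\<forall>i<n. \<exists>j. {k. (i,k) \<in> E} = {j}" and "\<forall>i j k. (i,k) \<in> E \<longrightarrow> (j,k) \<in> E \<longrightarrow> i = j"
proof -
  from assms obtain C where C1: "\<forall>ws\<in>C. distinct ws \<and> length ws \<ge> 2"
    and C2: "\<forall>ws1\<in>C. \<forall>ws2\<in>C. ws1 \<noteq> ws2 \<longrightarrow> set ws1 \<inter> set ws2 = {}"
    and C3: "(\<Union>ws\<in>C. set ws) = {0..<n}"
    and C4: "E = (\<Union>ws\<in>C. cycle_arcs ws)"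
    unfolding direct_sum_of_cycles_def by blast
  have arcE: "(x,y) \<in> E \<longleftrightarrow> (\<exists>ws\<in>C. \<exists>t<length ws. x = ws!t \<and> y = ws!((t+1) mod length ws))" for x y
    unfolding C4 cycle_arcs_def by auto
  have uniq: "ws1 = ws2" if "ws1 \<in> C" "ws2 \<in> C" "x \<in> set ws1" "x \<in> set ws2" for ws1 ws2 x
    using C2 that by blast
  show "\<forall>i<n. \<exists>j. {k. (i,k) \<in> E} = {j}"
  proof (intro allI impI)
    fix i assume "i < n"
    then have "i \<in> (\<Union>ws\<in>C. set ws)" using C3 by simp
    then obtain ws where ws: "ws \<in> C" "i \<in> set ws" by blast
    then obtain t where t: "t < length ws" "ws ! t = i" by (auto simp: in_set_conv_nth)
    define j where "j = ws ! ((t+1) mod length ws)"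
    have "{k. (i,k) \<in> E} = {j}"
    proof
      show "{j} \<subseteq> {k. (i,k) \<in> E}" using arcE ws t unfolding j_def by auto
      show "{k. (i,k) \<in> E} \<subseteq> {j}"
      proof
        fix k assume "k \<in> {k. (i,k) \<in> E}"
        then obtain ws' t' where w': "ws' \<in> C" "t' < length ws'" "i = ws'!t'" "k = ws'!((t'+1) mod length ws')"
          using arcE by auto
        have "ws' = ws" using uniq[OF w'(1) ws(1), of i] w' ws by auto
        then have "t' = t" using w' t C1 ws nth_eq_iff_index_eq by metis
        then show "k \<in> {j}" using w' \<open>ws' = ws\<close> unfolding j_def by simp
      qed
    qed
    then show "\<exists>j. {k. (i,k) \<in> E} = {j}" by blast
  qed
  show "\<forall>i j k. (i,k) \<in> E \<longrightarrow> (j,k) \<in> E \<longrightarrow> i = j"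
  proof (intro allI impI)
    fix i j k assume ik: "(i,k) \<in> E" and jk: "(j,k) \<in> E"
    from ik obtain ws1 t1 where w1: "ws1 \<in> C" "t1 < length ws1" "i = ws1!t1" "k = ws1!((t1+1) mod length ws1)"
      using arcE by auto
    from jk obtain ws2 t2 where w2: "ws2 \<in> C" "t2 < length ws2" "j = ws2!t2" "k = ws2!((t2+1) mod length ws2)"
      using arcE by auto
    have k1: "k \<in> set ws1" using w1 nth_mem mod_less_divisor by (metis gr_implies_not0 neq0_conv)
    have k2: "k \<in> set ws2" using w2 nth_mem mod_less_divisor by (metis gr_implies_not0 neq0_conv)
    have e: "ws2 = ws1" using uniq[OF w1(1) w2(1) k1 k2] by simp
    have l: "length ws1 > 0" using w1 by auto
    have "(t1+1) mod length ws1 = (t2+1) mod length ws1"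
      using w1 w2 e C1 nth_eq_iff_index_eq l by (metis mod_less_divisor)
    then have "t1 = t2" using modsuc_inj w1(2) w2(2) e by metis
    then show "i = j" using w1 w2 e by simp
  qed
qed

context
  fixes n :: nat and E :: "(nat \<times> nat) set" and \<alpha> :: real
  assumes sub: "E \<subseteq> {0..<n} \<times> {0..<n}" and noloop: "\<forall>i. (i, i) \<notin> E"
begin

lemma L_carrier: "A_alpha \<alpha> n E \<in> carrier_mat n n"
  by (simp add: A_alpha_def outdeg_mat_def adj_mat_def)

lemma L_entry:
  assumes "i < n" "j < n"
  shows "A_alpha \<alpha> n E $$ (i,j) = (if i = j then \<alpha> * real (outdeg E i) else 0) + (if (i,j) \<in> E then 1 - \<alpha> else 0)"
  using assms by (simp add: A_alpha_def outdeg_mat_def adj_mat_def)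

lemma out_fin: "finite {k. (i,k) \<in> E}"
  by (rule finite_subset[of _ "{0..<n}"]) (use sub in auto)

lemma out_set: "{k \<in> {0..<n}. (i,k) \<in> E} = {k. (i,k) \<in> E}"
  using sub by auto

lemma row_sq:
  assumes i: "i < n"
  shows "(\<Sum>k=0..<n. (A_alpha \<alpha> n E $$ (i,k))^2) = \<alpha>^2 * (real (outdeg E i))^2 + (1 - \<alpha>)^2 * real (outdeg E i)"
proof -
  have "(\<Sum>k=0..<n. (A_alpha \<alpha> n E $$ (i,k))^2)
      = (\<Sum>k=0..<n. (if k = i then \<alpha>^2 * (real (outdeg E i))^2 else 0) + (if (i,k) \<in> E then (1 - \<alpha>)^2 else 0))"
  proof (rule sum.cong[OF refl])
    fix k assume "k \<in> {0..<n}"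
    then show "(A_alpha \<alpha> n E $$ (i,k))^2 = (if k = i then \<alpha>^2 * (real (outdeg E i))^2 else 0) + (if (i,k) \<in> E then (1 - \<alpha>)^2 else 0)"
      using i noloop by (cases "k = i") (auto simp: L_entry power_mult_distrib)
  qed
  also have "\<dots> = \<alpha>^2 * (real (outdeg E i))^2 + (\<Sum>k=0..<n. if (i,k) \<in> E then (1 - \<alpha>)^2 else 0)"
    using i by (simp add: sum.distrib)
  also have "(\<Sum>k=0..<n. if (i,k) \<in> E then (1 - \<alpha>)^2 else 0) = (\<Sum>k\<in>{k \<in> {0..<n}. (i,k) \<in> E}. (1 - \<alpha>)^2)"
    by (rule sum.inter_filter[symmetric]) simp
  also have "\<dots> = (1 - \<alpha>)^2 * real (outdeg E i)"
    unfolding out_set outdeg_def by simp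
  finally show ?thesis .
qed

lemma card_E: "real (card E) = (\<Sum>i<n. real (outdeg E i))"
proof -
  have "E = Sigma {0..<n} (\<lambda>i. {k. (i,k) \<in> E})" using sub by auto
  then have "card E = (\<Sum>i\<in>{0..<n}. card {k. (i,k) \<in> E})"
    by (metis card_SigmaI finite_atLeastLessThan out_fin)
  then show ?thesis by (simp add: outdeg_def atLeast0LessThan)
qed

lemma S_entry:
  assumes "i < n" "j < n"
  shows "(A_alpha \<alpha> n E * transpose_mat (A_alpha \<alpha> n E)) $$ (i,j) = (\<Sum>k=0..<n. A_alpha \<alpha> n E $$ (i,k) * A_alpha \<alpha> n E $$ (j,k))"
  using assms L_carrier by (auto simp: scalar_prod_def)

lemma trace_S:
  "mtrace (A_alpha \<alpha> n E * transpose_mat (A_alpha \<alpha> n E)) = (1 - \<alpha>)^2 * real (card E) + \<alpha>^2 * (\<Sum>i<n. (real (outdeg E i))^2)"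
proof -
  have "mtrace (A_alpha \<alpha> n E * transpose_mat (A_alpha \<alpha> n E)) = (\<Sum>i=0..<n. (A_alpha \<alpha> n E * transpose_mat (A_alpha \<alpha> n E)) $$ (i,i))"
    unfolding mtrace_def using L_carrier by simp
  also have "\<dots> = (\<Sum>i=0..<n. \<Sum>k=0..<n. (A_alpha \<alpha> n E $$ (i,k))^2)"
    by (rule sum.cong[OF refl]) (subst S_entry, auto simp: power2_eq_square)
  also have "\<dots> = (\<Sum>i=0..<n. \<alpha>^2 * (real (outdeg E i))^2 + (1 - \<alpha>)^2 * real (outdeg E i))"
    by (rule sum.cong[OF refl]) (simp add: row_sq)
  also have "\<dots> = \<alpha>^2 * (\<Sum>i<n. (real (outdeg E i))^2) + (1 - \<alpha>)^2 * (\<Sum>i<n. real (outdeg E i))"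
    by (simp add: sum.distrib sum_distrib_left atLeast0LessThan)
  finally show ?thesis unfolding card_E by simp
qed


lemma key:
  assumes a0: "0 \<le> \<alpha>" and a1: "\<alpha> < 1"
  shows "(\<exists>c. A_alpha \<alpha> n E * transpose_mat (A_alpha \<alpha> n E) = c \<cdot>\<^sub>m 1\<^sub>m n)
     \<longleftrightarrow> E = {} \<or> (\<alpha> = 0 \<and> direct_sum_of_cycles n E)"
proof -
  let ?L = "A_alpha \<alpha> n E"
  let ?S = "?L * transpose_mat ?L"
  have Sc: "?S \<in> carrier_mat n n" using L_carrier by auto
  have Lnn: "?L $$ (i,j) \<ge> 0" if "i < n" "j < n" for i j
    using that a0 a1 by (simp add: L_entry)
  show ?thesis
  proof
    assume "\<exists>c. ?S = c \<cdot>\<^sub>m 1\<^sub>m n"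
    then obtain c where c: "?S = c \<cdot>\<^sub>m 1\<^sub>m n" by blast
    have Sij: "?S $$ (i,j) = (if i = j then c else 0)" if "i < n" "j < n" for i j
      using that by (simp add: c)
    show "E = {} \<or> (\<alpha> = 0 \<and> direct_sum_of_cycles n E)"
    proof (cases "E = {}")
      case True then show ?thesis by simp
    next
      case False
      then obtain i0 j0 where e0: "(i0, j0) \<in> E" by auto
      have i0: "i0 < n" and j0: "j0 < n" using e0 sub by auto
      have ij0: "i0 \<noteq> j0" using e0 noloop by auto
      have diag: "\<alpha>^2 * (real (outdeg E i))^2 + (1 - \<alpha>)^2 * real (outdeg E i) = c" if i: "i < n" for i
      proof -
        have "c = ?S $$ (i,i)" using Sij[OF i i] by simp
        also have "\<dots> = (\<Sum>k=0..<n. (?L $$ (i,k))^2)"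
          using i by (subst S_entry) (auto simp: power2_eq_square)
        finally show ?thesis using row_sq[OF i] by simp
      qed
      have d_pos: "outdeg E i0 \<ge> 1"
      proof -
        have "j0 \<in> {k. (i0,k) \<in> E}" using e0 by simp
        then have "card {k. (i0,k) \<in> E} > 0" using out_fin by (auto simp: card_gt_0_iff)
        then show ?thesis unfolding outdeg_def by simp
      qed
      have c_pos: "c > 0"
      proof -
        have "(1 - \<alpha>)^2 * 1 \<le> (1 - \<alpha>)^2 * real (outdeg E i0)"
          using d_pos by (intro mult_left_mono) auto
        moreover have "(1 - \<alpha>)^2 > 0" using a1 by simp
        moreover have "\<alpha>^2 * (real (outdeg E i0))^2 \<ge> 0" by simp
        ultimately show ?thesis using diag[OF i0] by linarith
      qed
      have dj0: "outdeg E j0 \<ge> 1"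
      proof (rule ccontr)
        assume "\<not> outdeg E j0 \<ge> 1"
        then have "outdeg E j0 = 0" by simp
        then show False using diag[OF j0] c_pos by simp
      qed
      have alpha0: "\<alpha> = 0"
      proof (rule ccontr)
        assume "\<alpha> \<noteq> 0"
        then have ap: "\<alpha> > 0" using a0 by simp
        have "?L $$ (i0,j0) * ?L $$ (j0,j0) \<le> (\<Sum>k=0..<n. ?L $$ (i0,k) * ?L $$ (j0,k))"
          by (rule member_le_sum) (use j0 i0 Lnn in auto)
        also have "\<dots> = ?S $$ (i0,j0)" using i0 j0 by (subst S_entry) auto
        also have "\<dots> = 0" using Sij[OF i0 j0] ij0 by simp
        finally have le: "?L $$ (i0,j0) * ?L $$ (j0,j0) \<le> 0" .
        have "?L $$ (i0,j0) = 1 - \<alpha>" using i0 j0 ij0 e0 by (simp add: L_entry)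
        moreover have "?L $$ (j0,j0) = \<alpha> * real (outdeg E j0)" using j0 noloop by (simp add: L_entry)
        moreover have "(1 - \<alpha>) * (\<alpha> * real (outdeg E j0)) > 0" using a1 ap dj0 by simp
        ultimately show False using le by simp
      qed
      have Lij: "?L $$ (i,j) = (if (i,j) \<in> E then 1 else 0)" if "i < n" "j < n" for i j
        using L_entry[OF that] alpha0 by simp
      have dc: "real (outdeg E i) = c" if "i < n" for i using diag[OF that] alpha0 by simp
      have D: "outdeg E i = outdeg E i0" if "i < n" for i using dc[OF that] dc[OF i0] by simp
      have disj: "i = j" if "i < n" "j < n" "(i,k) \<in> E" "(j,k) \<in> E" for i j k
      proof (rule ccontr)
        assume ne: "i \<noteq> j"
        have k: "k < n" using that sub by auto
        have "?L $$ (i,k) * ?L $$ (j,k) \<le> (\<Sum>k=0..<n. ?L $$ (i,k) * ?L $$ (j,k))"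
          by (rule member_le_sum) (use k that Lnn in auto)
        also have "\<dots> = ?S $$ (i,j)" using that by (subst S_entry) auto
        also have "\<dots> = 0" using Sij[OF that(1,2)] ne by simp
        finally show False using Lij[OF that(1) k] Lij[OF that(2) k] that by simp
      qed
      have D1: "outdeg E i0 = 1"
      proof -
        have "(\<Union>i\<in>{0..<n}. {k. (i,k) \<in> E}) \<subseteq> {0..<n}" using sub by auto
        then have "card (\<Union>i\<in>{0..<n}. {k. (i,k) \<in> E}) \<le> n"
          by (metis card_atLeastLessThan card_mono finite_atLeastLessThan diff_zero)
        moreover have "card (\<Union>i\<in>{0..<n}. {k. (i,k) \<in> E}) = (\<Sum>i\<in>{0..<n}. card {k. (i,k) \<in> E})"
          by (rule card_UN_disjoint) (auto simp: out_fin intro: disj)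
        moreover have "(\<Sum>i\<in>{0..<n}. card {k. (i,k) \<in> E}) = n * outdeg E i0"
        proof -
          have "(\<Sum>i\<in>{0..<n}. card {k. (i,k) \<in> E}) = (\<Sum>i\<in>{0..<n}. outdeg E i)" by (simp add: outdeg_def)
          also have "\<dots> = (\<Sum>i\<in>{0..<n}. outdeg E i0)" by (rule sum.cong) (auto simp: D)
          finally show ?thesis by simp
        qed
        ultimately have "n * outdeg E i0 \<le> n * 1" by simp
        moreover have "0 < n" using i0 by simp
        ultimately have "outdeg E i0 \<le> 1" by (simp only: nat_mult_le_cancel1)
        then show ?thesis using d_pos by linarith
      qed
      have single: "\<exists>x. {k. (i,k) \<in> E} = {x}" if "i < n" for i
        using D[OF that] D1 unfolding outdeg_def by (simp add: card_1_singleton_iff)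
      define f where "f i = (SOME x. {k. (i,k) \<in> E} = {x})" for i
      have fN: "{k. (i,k) \<in> E} = {f i}" if "i < n" for i
        unfolding f_def using someI_ex[OF single[OF that]] .
      have fE: "(i, f i) \<in> E" if "i < n" for i using fN[OF that] by auto
      have fn: "\<forall>i<n. f i < n"
      proof (intro allI impI)
        fix i assume "i < n"
        then have "(i, f i) \<in> E" by (rule fE)
        then have "(i, f i) \<in> {0..<n} \<times> {0..<n}" by (rule subsetD[OF sub])
        then show "f i < n" by simp
      qed
      have finj: "inj_on f {0..<n}"
      proof (rule inj_onI)
        fix x y assume x: "x \<in> {0..<n}" and y: "y \<in> {0..<n}" and fxy: "f x = f y"
        have x': "x < n" and y': "y < n" using x y by auto
        have e1: "(x, f x) \<in> E" by (rule fE[OF x'])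
        have e2: "(y, f x) \<in> E" using fE[OF y'] fxy by simp
        show "x = y" by (rule disj[OF x' y' e1 e2])
      qed
      have fnf: "\<forall>i<n. f i \<noteq> i" using fE noloop by metis
      have Eeq: "E = {(i, f i) | i. i < n}"
      proof
        show "E \<subseteq> {(i, f i) | i. i < n}"
        proof
          fix e assume e: "e \<in> E"
          obtain x y where xy: "e = (x,y)" by (cases e)
          have x: "x < n" using e xy sub by auto
          have "y \<in> {k. (x,k) \<in> E}" using e xy by simp
          then have "y = f x" using fN[OF x] by simp
          then show "e \<in> {(i, f i) | i. i < n}" using xy x by auto
        qed
        show "{(i, f i) | i. i < n} \<subseteq> E" using fE by auto
      qed
      have "direct_sum_of_cycles n E" unfolding Eeq by (rule perm_cycles[OF fn finj fnf])
      then show ?thesis using alpha0 by simp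
    qed
  next
    assume "E = {} \<or> (\<alpha> = 0 \<and> direct_sum_of_cycles n E)"
    then show "\<exists>c. ?S = c \<cdot>\<^sub>m 1\<^sub>m n"
    proof
      assume E0: "E = {}"
      have "?S = 0 \<cdot>\<^sub>m 1\<^sub>m n"
      proof (rule eq_matI)
        fix i j assume "i < dim_row (0 \<cdot>\<^sub>m 1\<^sub>m n)" "j < dim_col (0 \<cdot>\<^sub>m 1\<^sub>m n)"
        then have ij: "i < n" "j < n" by auto
        show "?S $$ (i,j) = (0 \<cdot>\<^sub>m 1\<^sub>m n) $$ (i,j)"
        proof -
          have L0: "?L $$ (i,k) = 0" if "i < n" "k < n" for i k
            using L_entry[OF that] E0 by (simp add: outdeg_def)
          have "?S $$ (i,j) = (\<Sum>k=0..<n. ?L $$ (i,k) * ?L $$ (j,k))" using ij by (rule S_entry)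
          also have "\<dots> = 0" using ij L0 by simp
          finally show ?thesis using ij by simp
        qed
      qed (use Sc in auto)
      then show ?thesis by blast
    next
      assume "\<alpha> = 0 \<and> direct_sum_of_cycles n E"
      then have alpha0: "\<alpha> = 0" and cyc: "direct_sum_of_cycles n E" by auto
      note cp = cyc_props[OF cyc]
      have Lij: "?L $$ (i,j) = (if (i,j) \<in> E then 1 else 0)" if "i < n" "j < n" for i j
        using L_entry[OF that] alpha0 by simp
      have "?S = 1 \<cdot>\<^sub>m 1\<^sub>m n"
      proof (rule eq_matI)
        fix i j assume "i < dim_row (1 \<cdot>\<^sub>m 1\<^sub>m n)" "j < dim_col (1 \<cdot>\<^sub>m 1\<^sub>m n)"
        then have ij: "i < n" "j < n" by auto
        obtain g where g: "{k. (i,k) \<in> E} = {g}" using cp(1) ij by blast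
        have gE: "(i,g) \<in> E" using g by auto
        have gn: "g < n" using gE sub by auto
        have "?S $$ (i,j) = (\<Sum>k=0..<n. ?L $$ (i,k) * ?L $$ (j,k))" using ij by (rule S_entry)
        also have "\<dots> = (\<Sum>k=0..<n. if k = g then ?L $$ (j,k) else 0)"
        proof (rule sum.cong[OF refl])
          fix k assume "k \<in> {0..<n}"
          then have k: "k < n" by simp
          have "(i,k) \<in> E \<longleftrightarrow> k = g" using g by auto
          then show "?L $$ (i,k) * ?L $$ (j,k) = (if k = g then ?L $$ (j,k) else 0)"
            using Lij[OF ij(1) k] by simp
        qed
        also have "\<dots> = ?L $$ (j,g)" using gn by simp
        also have "\<dots> = (if i = j then 1 else 0)"
          using Lij[OF ij(2) gn] gE cp(2) by auto
        finally show "?S $$ (i,j) = (1 \<cdot>\<^sub>m 1\<^sub>m n) $$ (i,j)" using ij by simp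
      qed (use Sc in auto)
      then show ?thesis by blast
    qed
  qed
qed

end


theorem theorem3p1:
  fixes n :: nat and E :: "(nat \<times> nat) set" and \<alpha> :: real
  assumes "E \<subseteq> {0..<n} \<times> {0..<n}"
    and "\<forall>i. (i, i) \<notin> E"
    and "0 \<le> \<alpha>" and "\<alpha> < 1"
  shows "alpha_trace_norm \<alpha> n E
           \<le> sqrt (real n * ((1 - \<alpha>)^2 * real (card E)
                 + \<alpha>^2 * (\<Sum>i<n. (real (outdeg E i))^2)))
       \<and> (alpha_trace_norm \<alpha> n E
           = sqrt (real n * ((1 - \<alpha>)^2 * real (card E)
                 + \<alpha>^2 * (\<Sum>i<n. (real (outdeg E i))^2)))
          \<longleftrightarrow> E = {} \<or> (\<alpha> = 0 \<and> direct_sum_of_cycles n E))"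
proof -
  have Lc: "A_alpha \<alpha> n E \<in> carrier_mat n n" by (rule L_carrier[OF assms(1,2)])
  have tr: "mtrace (A_alpha \<alpha> n E * transpose_mat (A_alpha \<alpha> n E)) = (1 - \<alpha>)^2 * real (card E) + \<alpha>^2 * (\<Sum>i<n. (real (outdeg E i))^2)"
    by (rule trace_S[OF assms(1,2)])
  have k: "(\<exists>c. A_alpha \<alpha> n E * transpose_mat (A_alpha \<alpha> n E) = c \<cdot>\<^sub>m 1\<^sub>m n)
     \<longleftrightarrow> E = {} \<or> (\<alpha> = 0 \<and> direct_sum_of_cycles n E)"
    by (rule key[OF assms(1,2,3,4)])
  show ?thesis unfolding alpha_trace_norm_def using tn_main[OF Lc] k tr by simp
qed

end
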